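(* Let $F$ be WORDER or WMAJORITY with weights $w_1\ge\dots\ge w_n>0$. If SMO-GP-single on MO-$F$ is started with a non-redundant initial tree, then its expected optimization time is $O(n^3)$.
   Context: Fix an integer $n\ge 1$ and real weights $w_1\ge w_2\ge\dots\ge w_n>0$. The terminal set is $T=\{x_1,\bar x_1,\dots,x_n,\bar x_n\}$ ($\bar x_i$ is the complement of $x_i$; $x_i$ is called positive). A syntax tree is either the empty tree or a rooted ordered binary tree whose inner nodes are all labelled by the binary function $J$ (join, exactly two ordered children) and whose leaves are labelled by elements of $T$. The complexity $C(X)$ is the number of nodes of $X$ (0 for the empty tree). The leaf list $l$ of $X$ is the sequence of leaf labels in an inorder traversal. WORDER: build a list $S$ by scanning $l$ from front to rear and appending a literal only if neither it nor its complement is already in $S$; WORDER$(X)=\sum_{i:\,x_i\in S} w_i$; the expressed variables are the $x_i\in S$. WMAJORITY: WMAJORITY$(X)=\sum w_i$ over all $i$ such that $x_i$ occurs in $l$ at least once and at least as often as $\bar x_i$; these $x_i$ are the expressed variables. A tree is non-redundant if it is empty or if, with $k$ its number of expressed variables, its complexity is $2k-1$. MO-$F(X)=(F(X),C(X))$, $F$ maximized and $C$ minimized. Mutation (one HVL-Prime application): choose uniformly at random one of three operations. Substitute: replace a uniformly random leaf by a uniformly random $u\in T$. Insert: choose a uniformly random node $v$ and uniformly random $u\in T$, replace $v$ by a $J$-node with children $u$ and $v$ in uniformly random order (inserting into the empty tree yields the single leaf $u$). Delete: choose a uniformly random leaf $v$ with parent $p$ and sibling $u$, replace $p$ by $u$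 (deleting $p$ and $v$; deleting the only leaf of a one-leaf tree yields the empty tree). Dominance: $Y\succeq X$ iff $F(Y)\ge F(X)$ and $C(Y)\le C(X)$; $Y\succ X$ iff $Y\succeq X$ and ($F(Y)>F(X)$ or $C(Y)<C(X)$). A tree is Pareto optimal if no tree dominates it; the Pareto front is the set of objective vectors of Pareto optimal trees. SMO-GP-single: choose an initial tree $X$ and set $P:=\{X\}$; repeat: choose $X\in P$ uniformly at random, let $Y$ be $X$ after one HVL-Prime application; if no $Z\in P$ satisfies $Z\succ Y$, set $P:=(P\setminus\{Z\in P: Y\succeq Z\})\cup\{Y\}$. Expected optimization time: expected number of iterations until the population contains, for every objective vector in the Pareto front, a tree with that objective vector. *)

theory Defs
  imports "HOL-Probability.Probability"
begin

text \<open>Literal x_i is Pos i, its complement is Neg i (variables indexed 1..n).\<close>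
datatype lit = Pos nat | Neg nat

definition terminals :: "nat \<Rightarrow> lit set" where
  "terminals n = Pos ` {1..n} \<union> Neg ` {1..n}"

text \<open>Non-empty syntax trees; the empty tree is None in stree option.\<close>
datatype stree = L lit | J stree stree

fun nodes :: "stree \<Rightarrow> nat" where
  "nodes (L a) = 1"
| "nodes (J l r) = nodes l + nodes r + 1"

fun nleaves :: "stree \<Rightarrow> nat" where
  "nleaves (L a) = 1"
| "nleaves (J l r) = nleaves l + nleaves r"

fun leaves :: "stree \<Rightarrow> lit list" where
  "leaves (L a) = [a]"
| "leaves (J l r) = leaves l @ leaves r"

definition cplx :: "stree option \<Rightarrow> nat" where
  "cplx X = (case X of None \<Rightarrow> 0 | Some t \<Rightarrow> nodes t)"

definition leaflist :: "stree option \<Rightarrow> lit list" where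
  "leaflist X = (case X of None \<Rightarrow> [] | Some t \<Rightarrow> leaves t)"

definition valid_tree :: "nat \<Rightarrow> stree option \<Rightarrow> bool" where
  "valid_tree n X \<longleftrightarrow> set (leaflist X) \<subseteq> terminals n"

fun var :: "lit \<Rightarrow> nat" where
  "var (Pos i) = i" | "var (Neg i) = i"

fun compl :: "lit \<Rightarrow> lit" where
  "compl (Pos i) = Neg i" | "compl (Neg i) = Pos i"

fun worder_scan :: "lit list \<Rightarrow> lit list \<Rightarrow> lit list" where
  "worder_scan S [] = S"
| "worder_scan S (a # l) =
     (if a \<in> set S \<or> compl a \<in> set S then worder_scan S l else worder_scan (S @ [a]) l)"

definition worder_S :: "stree option \<Rightarrow> lit list" where
  "worder_S X = worder_scan [] (leaflist X)"

definition expressed_worder :: "stree option \<Rightarrow> nat set" where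
  "expressed_worder X = {i. Pos i \<in> set (worder_S X)}"

definition expressed_wmajority :: "stree option \<Rightarrow> nat set" where
  "expressed_wmajority X =
     {i. count (mset (leaflist X)) (Pos i) \<ge> 1 \<and>
         count (mset (leaflist X)) (Pos i) \<ge> count (mset (leaflist X)) (Neg i)}"

datatype fitness = WORDER | WMAJORITY

definition expressed :: "fitness \<Rightarrow> stree option \<Rightarrow> nat set" where
  "expressed F X = (case F of WORDER \<Rightarrow> expressed_worder X
                             | WMAJORITY \<Rightarrow> expressed_wmajority X)"

definition fit :: "fitness \<Rightarrow> (nat \<Rightarrow> real) \<Rightarrow> stree option \<Rightarrow> real" where
  "fit F w X = (\<Sum>i\<in>expressed F X. w i)"

definition non_redundant :: "fitness \<Rightarrow> stree option \<Rightarrow> bool" where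
  "non_redundant F X \<longleftrightarrow>
     X = None \<or> int (cplx X) = 2 * int (card (expressed F X)) - 1"

definition weakly_dom :: "fitness \<Rightarrow> (nat \<Rightarrow> real) \<Rightarrow> stree option \<Rightarrow> stree option \<Rightarrow> bool" where
  "weakly_dom F w Y X \<longleftrightarrow> fit F w Y \<ge> fit F w X \<and> cplx Y \<le> cplx X"

definition strictly_dom :: "fitness \<Rightarrow> (nat \<Rightarrow> real) \<Rightarrow> stree option \<Rightarrow> stree option \<Rightarrow> bool" where
  "strictly_dom F w Y X \<longleftrightarrow>
     weakly_dom F w Y X \<and> (fit F w Y > fit F w X \<or> cplx Y < cplx X)"

definition objvec :: "fitness \<Rightarrow> (nat \<Rightarrow> real) \<Rightarrow> stree option \<Rightarrow> real \<times> nat" where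
  "objvec F w X = (fit F w X, cplx X)"

definition pareto_optimal :: "nat \<Rightarrow> fitness \<Rightarrow> (nat \<Rightarrow> real) \<Rightarrow> stree option \<Rightarrow> bool" where
  "pareto_optimal n F w X \<longleftrightarrow>
     valid_tree n X \<and> \<not> (\<exists>Y. valid_tree n Y \<and> strictly_dom F w Y X)"

definition pareto_front :: "nat \<Rightarrow> fitness \<Rightarrow> (nat \<Rightarrow> real) \<Rightarrow> (real \<times> nat) set" where
  "pareto_front n F w = objvec F w ` {X. pareto_optimal n F w X}"

definition covers_front :: "nat \<Rightarrow> fitness \<Rightarrow> (nat \<Rightarrow> real) \<Rightarrow> stree option set \<Rightarrow> bool" where
  "covers_front n F w P \<longleftrightarrow> (\<forall>v\<in>pareto_front n F w. \<exists>X\<in>P. objvec F w X = v)"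

text \<open>Replace the k-th leaf (inorder, from 0) by u.\<close>
fun subst_leaf :: "stree \<Rightarrow> nat \<Rightarrow> lit \<Rightarrow> stree" where
  "subst_leaf (L a) k u = L u"
| "subst_leaf (J l r) k u =
     (if k < nleaves l then J (subst_leaf l k u) r else J l (subst_leaf r (k - nleaves l) u))"

text \<open>Replace the k-th node (preorder, from 0) v by J u v (b = True) or J v u (b = False).\<close>
fun ins_node :: "stree \<Rightarrow> nat \<Rightarrow> lit \<Rightarrow> bool \<Rightarrow> stree" where
  "ins_node t k u b =
     (if k = 0 then (if b then J (L u) t else J t (L u))
      else (case t of L a \<Rightarrow> t
           | J l r \<Rightarrow> if k - 1 < nodes l then J (ins_node l (k - 1) u b) r
                      else J l (ins_node r (k - 1 - nodes l) u b)))"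

text \<open>Delete the k-th leaf (inorder, from 0): its parent is replaced by its sibling;
  deleting the only leaf gives the empty tree (None).\<close>
fun del_leaf :: "stree \<Rightarrow> nat \<Rightarrow> stree option" where
  "del_leaf (L a) k = None"
| "del_leaf (J l r) k =
     (if k < nleaves l then
        (case del_leaf l k of None \<Rightarrow> Some r | Some l' \<Rightarrow> Some (J l' r))
      else
        (case del_leaf r (k - nleaves l) of None \<Rightarrow> Some l | Some r' \<Rightarrow> Some (J l r')))"

definition substitute :: "nat \<Rightarrow> stree option \<Rightarrow> stree option pmf" where
  "substitute n X = (case X of None \<Rightarrow> return_pmf None
     | Some t \<Rightarrow> do { k \<leftarrow> pmf_of_set {..<nleaves t}; u \<leftarrow> pmf_of_set (terminals n);
                      return_pmf (Some (subst_leaf t k u)) })"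

definition insert_op :: "nat \<Rightarrow> stree option \<Rightarrow> stree option pmf" where
  "insert_op n X = (case X of None \<Rightarrow> map_pmf (\<lambda>u. Some (L u)) (pmf_of_set (terminals n))
     | Some t \<Rightarrow> do { k \<leftarrow> pmf_of_set {..<nodes t}; u \<leftarrow> pmf_of_set (terminals n);
                      b \<leftarrow> pmf_of_set (UNIV :: bool set);
                      return_pmf (Some (ins_node t k u b)) })"

definition delete_op :: "stree option \<Rightarrow> stree option pmf" where
  "delete_op X = (case X of None \<Rightarrow> return_pmf None
     | Some t \<Rightarrow> map_pmf (del_leaf t) (pmf_of_set {..<nleaves t}))"

definition hvl_prime :: "nat \<Rightarrow> stree option \<Rightarrow> stree option pmf" where
  "hvl_prime n X = do { op \<leftarrow> pmf_of_set {0::nat, 1, 2};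
     (if op = 0 then substitute n X else if op = 1 then insert_op n X else delete_op X) }"

definition smo_step :: "nat \<Rightarrow> fitness \<Rightarrow> (nat \<Rightarrow> real) \<Rightarrow> stree option set \<Rightarrow> stree option set pmf" where
  "smo_step n F w P = do { X \<leftarrow> pmf_of_set P; Y \<leftarrow> hvl_prime n X;
     return_pmf (if (\<exists>Z\<in>P. strictly_dom F w Z Y) then P
                 else (P - {Z\<in>P. weakly_dom F w Y Z}) \<union> {Y}) }"

text \<open>The process stopped once the Pareto front is covered (so that the probability of
  not being covered at time t is the probability that the hitting time exceeds t).\<close>
definition stopped_step :: "nat \<Rightarrow> fitness \<Rightarrow> (nat \<Rightarrow> real) \<Rightarrow> stree option set \<Rightarrow> stree option set pmf" where
  "stopped_step n F w P = (if covers_front n F w P then return_pmf P else smo_step n F w P)"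

primrec smo_run :: "nat \<Rightarrow> fitness \<Rightarrow> (nat \<Rightarrow> real) \<Rightarrow> stree option \<Rightarrow> nat \<Rightarrow> stree option set pmf" where
  "smo_run n F w X0 0 = return_pmf {X0}"
| "smo_run n F w X0 (Suc t) = bind_pmf (smo_run n F w X0 t) (stopped_step n F w)"

text \<open>Expected optimization time E[T] = sum over t \<ge> 0 of Pr[T > t].\<close>
definition expected_opt_time :: "nat \<Rightarrow> fitness \<Rightarrow> (nat \<Rightarrow> real) \<Rightarrow> stree option \<Rightarrow> ennreal" where
  "expected_opt_time n F w X0 =
     (\<Sum>t. ennreal (measure_pmf.prob (smo_run n F w X0 t) {P. \<not> covers_front n F w P}))"

end

theory Submission
  imports Defs
begin


definition posv :: "lit list \<Rightarrow> nat set" where "posv l = {i. Pos i \<in> set l}"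
definition ispos :: "lit \<Rightarrow> bool" where "ispos a \<longleftrightarrow> (\<exists>i. a = Pos i)"
definition pd :: "lit list \<Rightarrow> bool" where "pd l \<longleftrightarrow> distinct l \<and> (\<forall>a\<in>set l. ispos a)"

definition Exl :: "fitness \<Rightarrow> lit list \<Rightarrow> nat set" where
  "Exl F l = (case F of WORDER \<Rightarrow> {i. Pos i \<in> set (worder_scan [] l)}
      | WMAJORITY \<Rightarrow> {i. count (mset l) (Pos i) \<ge> 1 \<and> count (mset l) (Pos i) \<ge> count (mset l) (Neg i)})"

lemma expressed_Ex: "expressed F X = Exl F (leaflist X)"
  by (cases F) (simp_all add: expressed_def expressed_worder_def worder_S_def expressed_wmajority_def Exl_def)

lemma posv_append[simp]: "posv (a @ b) = posv a \<union> posv b" by (auto simp: posv_def)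
lemma posv_Cons[simp]: "posv (x # b) = (case x of Pos i \<Rightarrow> {i} | Neg i \<Rightarrow> {}) \<union> posv b"
  by (cases x) (auto simp: posv_def)
lemma posv_Nil[simp]: "posv [] = {}" by (simp add: posv_def)

lemma finite_posv[simp]: "finite (posv l)"
proof -
  have "posv l \<subseteq> var ` set l" by (force simp: posv_def)
  thus ?thesis by (rule finite_subset) simp
qed

lemma scan_sub: "set (worder_scan S l) \<subseteq> set S \<union> set l"
  by (induction S l rule: worder_scan.induct) auto

lemma Exl_sub: "Exl F l \<subseteq> posv l"
proof (cases F)
  case WORDER thus ?thesis using scan_sub[of "[]" l] by (auto simp: Exl_def posv_def)
next
  case WMAJORITY thus ?thesis by (auto simp: Exl_def posv_def dest: count_inI[rotated] )
qed

lemma scan_pd: "distinct (S @ l) \<Longrightarrow> \<forall>a\<in>set (S @ l). ispos a \<Longrightarrow> worder_scan S l = S @ l"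
proof (induction l arbitrary: S)
  case Nil thus ?case by simp
next
  case (Cons a l)
  from Cons.prems obtain i where a: "a = Pos i" by (auto simp: ispos_def)
  have "a \<notin> set S" using Cons.prems by auto
  moreover have "compl a \<notin> set S" using Cons.prems a by (auto simp: ispos_def)
  ultimately have "worder_scan S (a # l) = worder_scan (S @ [a]) l" by simp
  also have "\<dots> = (S @ [a]) @ l" using Cons.prems by (intro Cons.IH) auto
  finally show ?case by simp
qed

lemma Exl_pd: "pd l \<Longrightarrow> Exl F l = posv l"
proof (cases F)
  case WORDER
  assume "pd l"
  hence "worder_scan [] l = l" using scan_pd[of "[]" l] by (auto simp: pd_def)
  thus ?thesis using WORDER by (simp add: Exl_def posv_def)
next
  case WMAJORITY
  assume p: "pd l"
  have "Neg i \<notin> set l" for i using p by (auto simp: pd_def ispos_def)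
  hence z: "count (mset l) (Neg i) = 0" for i by (simp add: count_mset_0_iff)
  moreover have "Pos i \<in> set l \<Longrightarrow> count (mset l) (Pos i) \<ge> 1" for i by (simp add: Suc_le_eq)
  moreover have "count (mset l) (Pos i) \<ge> 1 \<Longrightarrow> Pos i \<in> set l" for i
    by (metis count_inI not_one_le_zero set_mset_mset)
  moreover have "count (mset l) (Neg i) \<le> count (mset l) (Pos i)" for i using z[of i] by linarith
  ultimately show ?thesis using WMAJORITY by (auto simp: Exl_def posv_def simp del: count_mset)
qed

lemma Pos_posv: "Pos ` posv l \<subseteq> set l" by (auto simp: posv_def)

lemma card_posv_le: "card (posv l) \<le> length l"
proof -
  have "card (posv l) = card (Pos ` posv l)" by (simp add: card_image inj_on_def)
  also have "\<dots> \<le> card (set l)" by (rule card_mono) (auto simp: posv_def)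
  also have "\<dots> \<le> length l" by (rule card_length)
  finally show ?thesis .
qed

lemma pd_set: "pd l \<Longrightarrow> set l = Pos ` posv l"
  by (auto simp: pd_def ispos_def posv_def)

lemma card_posv_pd: "pd l \<Longrightarrow> card (posv l) = length l"
proof -
  assume p: "pd l"
  have "card (posv l) = card (Pos ` posv l)" by (simp add: card_image inj_on_def)
  also have "\<dots> = card (set l)" using pd_set[OF p] by simp
  also have "\<dots> = length l" using p by (simp add: pd_def distinct_card)
  finally show ?thesis .
qed

lemma card_Ex_le: "card (Exl F l) \<le> length l"
  using card_mono[OF finite_posv Exl_sub] card_posv_le le_trans by blast

lemma card_Ex_eq: "card (Exl F l) = length l \<Longrightarrow> pd l \<and> Exl F l = posv l"
proof -
  assume e: "card (Exl F l) = length l"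
  have c1: "card (Exl F l) \<le> card (posv l)" by (rule card_mono[OF finite_posv Exl_sub])
  have c2: "card (posv l) = card (Pos ` posv l)" by (simp add: card_image inj_on_def)
  have c3: "card (Pos ` posv l) \<le> card (set l)" by (rule card_mono) (auto simp: posv_def)
  have c4: "card (set l) \<le> length l" by (rule card_length)
  have "card (set l) = length l" using e c1 c2 c3 c4 by linarith
  hence d: "distinct l" by (simp add: card_distinct)
  have "Pos ` posv l = set l"
    by (rule card_subset_eq) (use e c1 c2 c3 c4 Pos_posv in auto)
  hence "\<forall>a\<in>set l. ispos a" by (auto simp: ispos_def)
  moreover have "Exl F l = posv l"
    by (rule card_subset_eq[OF finite_posv Exl_sub]) (use e c1 c2 c3 c4 in linarith)
  ultimately show ?thesis using d by (simp add: pd_def)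
qed

lemma length_leaves: "length (leaves t) = nleaves t"
  by (induction t) auto

lemma nleaves_pos: "nleaves t \<ge> 1"
  by (induction t) auto

lemma nodes_leaves: "nodes t = 2 * nleaves t - 1"
proof (induction t)
  case (J l r) thus ?case using nleaves_pos[of l] nleaves_pos[of r] by simp
qed simp

lemma cplx_len: "cplx X = 2 * length (leaflist X) - 1"
  by (cases X) (auto simp: cplx_def leaflist_def length_leaves nodes_leaves)

lemma leaflist_Some_ne: "leaflist (Some t) \<noteq> []"
  using nleaves_pos[of t] length_leaves[of t] by (auto simp: leaflist_def)

lemma leaflist_None[simp]: "leaflist None = []" by (simp add: leaflist_def)
lemma leaflist_Some[simp]: "leaflist (Some t) = leaves t" by (simp add: leaflist_def)

lemma leaflist_empty_iff: "leaflist X = [] \<longleftrightarrow> X = None"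
  using leaflist_Some_ne by (cases X) auto

lemma cplx_0_iff: "cplx X = 0 \<longleftrightarrow> X = None"
proof -
  have "2 * length (leaflist X) - 1 = 0 \<longleftrightarrow> leaflist X = []" by (cases "leaflist X") auto
  thus ?thesis using leaflist_empty_iff[of X] by (simp add: cplx_len)
qed

lemma leaves_subst: "k < nleaves t \<Longrightarrow> leaves (subst_leaf t k u) = (leaves t)[k := u]"
  by (induction t arbitrary: k) (auto simp: list_update_append length_leaves)

lemma leaves_ins: "k < nodes t \<Longrightarrow> \<exists>a b. leaves t = a @ b \<and> leaves (ins_node t k u c) = a @ u # b"
proof (induction t k u c rule: ins_node.induct)
  case (1 t k u c)
  show ?case
  proof (cases "k = 0")
    case True thus ?thesis by (cases c) (auto intro: exI[of _ "[]"])
  next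
    case False
    then obtain l r where t: "t = J l r" using 1(3) by (cases t) auto
    show ?thesis
    proof (cases "k - 1 < nodes l")
      case True
      then obtain a b where "leaves l = a @ b" "leaves (ins_node l (k - 1) u c) = a @ u # b"
        using 1(1)[OF False t] by blast
      thus ?thesis using t False True by (intro exI[of _ a] exI[of _ "b @ leaves r"]) auto
    next
      case f2: False
      have "k - 1 - nodes l < nodes r" using 1(3) t False f2 by auto
      then obtain a b where "leaves r = a @ b" "leaves (ins_node r (k - 1 - nodes l) u c) = a @ u # b"
        using 1(2)[OF False t f2] by blast
      thus ?thesis using t False f2 by (intro exI[of _ "leaves l @ a"] exI[of _ b]) auto
    qed
  qed
qed

lemma leaves_del: "k < nleaves t \<Longrightarrow> leaflist (del_leaf t k) = take k (leaves t) @ drop (Suc k) (leaves t)"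
proof (induction t arbitrary: k)
  case (L a) thus ?case by simp
next
  case (J l r)
  show ?case
  proof (cases "k < nleaves l")
    case True
    have "leaflist (del_leaf l k) = take k (leaves l) @ drop (Suc k) (leaves l)" using J True by simp
    thus ?thesis using True
      by (cases "del_leaf l k") (auto simp: length_leaves)
  next
    case False
    have "k - nleaves l < nleaves r" using J.prems False by simp
    hence "leaflist (del_leaf r (k - nleaves l)) = take (k - nleaves l) (leaves r) @ drop (Suc (k - nleaves l)) (leaves r)"
      using J by simp
    moreover have "Suc k - nleaves l = Suc (k - nleaves l)" using False by simp
    ultimately show ?thesis using False
      by (cases "del_leaf r (k - nleaves l)") (auto simp: length_leaves)
  qed
qed



fun ct :: "nat \<Rightarrow> stree" where
  "ct 0 = L (Pos 1)"
| "ct (Suc k) = J (ct k) (L (Pos (k + 2)))"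

definition canon :: "nat \<Rightarrow> stree option" where
  "canon k = (if k = 0 then None else Some (ct (k - 1)))"

lemma leaves_ct: "leaves (ct k) = map Pos [1..<k+2]"
  by (induction k) auto

lemma leaflist_canon: "leaflist (canon k) = map Pos [1..<k+1]"
  by (cases k) (auto simp: canon_def leaves_ct)

lemma pd_canon: "pd (leaflist (canon k))"
  by (auto simp: leaflist_canon pd_def ispos_def distinct_map inj_on_def)

lemma posv_canon: "posv (leaflist (canon k)) = {1..k}"
  by (auto simp: leaflist_canon posv_def)

lemma Pos_terminals: "Pos i \<in> terminals n \<longleftrightarrow> 1 \<le> i \<and> i \<le> n"
  by (auto simp: terminals_def)

lemma finite_terminals: "finite (terminals n)" by (simp add: terminals_def)

lemma card_terminals: "card (terminals n) = 2 * n"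
proof -
  have "card (Pos ` {1..n}) = n" by (simp add: card_image inj_on_def)
  moreover have "card (Neg ` {1..n}) = n" by (simp add: card_image inj_on_def)
  moreover have "Pos ` {1..n} \<inter> Neg ` {1..n} = {}" by auto
  ultimately show ?thesis unfolding terminals_def by (simp add: card_Un_disjoint)
qed

lemma posv_terminals: "set l \<subseteq> terminals n \<Longrightarrow> posv l \<subseteq> {1..n}"
  using Pos_terminals by (force simp: posv_def)

definition tgt :: "(nat \<Rightarrow> real) \<Rightarrow> nat \<Rightarrow> real \<times> nat" where
  "tgt w k = (\<Sum>i\<in>{1..k}. w i, 2 * k - 1)"

lemma fit_Exl: "fit F w X = sum w (Exl F (leaflist X))"
  by (simp add: fit_def expressed_Ex)

locale setting =
  fixes n :: nat and F :: fitness and w :: "nat \<Rightarrow> real"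
  assumes n1: "n \<ge> 1"
    and wdec: "\<forall>i\<in>{1..<n}. w i \<ge> w (Suc i)"
    and wpos: "w n > 0"
begin

definition W :: "nat \<Rightarrow> real" where "W k = (\<Sum>i\<in>{1..k}. w i)"

lemma tgt_W: "tgt w k = (W k, 2 * k - 1)" by (simp add: tgt_def W_def)

lemma wmono_aux: "1 \<le> i \<Longrightarrow> i + d \<le> n \<Longrightarrow> w (i + d) \<le> w i"
proof (induction d)
  case 0 thus ?case by simp
next
  case (Suc d)
  have "i + d \<in> {1..<n}" using Suc.prems by simp
  hence "w (Suc (i + d)) \<le> w (i + d)" using wdec by blast
  thus ?case using Suc by simp
qed

lemma wmono: "1 \<le> i \<Longrightarrow> i \<le> j \<Longrightarrow> j \<le> n \<Longrightarrow> w j \<le> w i"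
  using wmono_aux[of i "j - i"] by simp

lemma wpos': "1 \<le> i \<Longrightarrow> i \<le> n \<Longrightarrow> w i > 0"
  using wmono[of i n] wpos by simp

lemma W_Suc: "W (Suc k) = W k + w (Suc k)"
  by (simp add: W_def)

lemma W_0[simp]: "W 0 = 0" by (simp add: W_def)

lemma W_strict_aux: "k + Suc d \<le> n \<Longrightarrow> W k < W (k + Suc d)"
proof (induction d)
  case 0
  have "w (Suc k) > 0" using wpos' 0 by simp
  thus ?case using W_Suc[of k] by simp
next
  case (Suc d)
  have "w (Suc (k + Suc d)) > 0" using wpos' Suc.prems by simp
  thus ?case using W_Suc[of "k + Suc d"] Suc by simp
qed

lemma W_strict: "k < k' \<Longrightarrow> k' \<le> n \<Longrightarrow> W k < W k'"
  using W_strict_aux[of k "k' - k - 1"] by simp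

lemma W_mono: "k \<le> k' \<Longrightarrow> k' \<le> n \<Longrightarrow> W k \<le> W k'"
  using W_strict[of k k'] by (cases "k = k'") auto

lemma subset_sum: "m \<le> n \<Longrightarrow> A \<subseteq> {1..m} \<Longrightarrow> sum w A \<le> W (card A)"
proof (induction m arbitrary: A)
  case 0 hence "A = {}" by auto
  thus ?case by simp
next
  case (Suc m)
  show ?case
  proof (cases "Suc m \<in> A")
    case False
    hence "A \<subseteq> {1..m}" using Suc.prems by (auto simp: le_Suc_eq)
    thus ?thesis using Suc.IH[of A] Suc.prems by simp
  next
    case True
    define A' where "A' = A - {Suc m}"
    have A': "A' \<subseteq> {1..m}" using Suc.prems by (auto simp: A'_def le_Suc_eq)
    have fin: "finite A'" using A' finite_subset by blast
    have A: "A = insert (Suc m) A'" "Suc m \<notin> A'" using True by (auto simp: A'_def)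
    have cA: "card A = Suc (card A')" using A fin by simp
    have cle: "card A' \<le> m" using card_mono[OF _ A'] by simp
    have "sum w A = sum w A' + w (Suc m)" using A fin by simp
    also have "\<dots> \<le> W (card A') + w (Suc (card A'))"
      using Suc.IH[OF _ A'] Suc.prems wmono[of "Suc (card A')" "Suc m"] cle by simp
    also have "\<dots> = W (card A)" using cA W_Suc by simp
    finally show ?thesis .
  qed
qed

abbreviation valid where "valid X \<equiv> valid_tree n X"

lemma valid_posv: "valid X \<Longrightarrow> posv (leaflist X) \<subseteq> {1..n}"
  unfolding valid_tree_def by (rule posv_terminals)

lemma valid_Exl: "valid X \<Longrightarrow> Exl F (leaflist X) \<subseteq> {1..n}"
  using valid_posv Exl_sub by blast

lemma fit_bound: "valid X \<Longrightarrow> fit F w X \<le> W (card (Exl F (leaflist X)))"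
  unfolding fit_Exl using subset_sum[OF order_refl valid_Exl] .

lemma card_Exl_n: "valid X \<Longrightarrow> card (Exl F (leaflist X)) \<le> n"
  using card_mono[OF _ valid_Exl] by fastforce

lemma cplx_bound: "cplx X \<ge> 2 * card (Exl F (leaflist X)) - 1"
  using card_Ex_le[of F "leaflist X"] by (simp add: cplx_len)

lemma tgt_opt:
  assumes v: "valid Y" and k: "k \<le> n" and f: "W k \<le> fit F w Y" and c: "cplx Y \<le> 2 * k - 1"
  shows "objvec F w Y = tgt w k"
proof -
  define e where "e = card (Exl F (leaflist Y))"
  have fb: "fit F w Y \<le> W e" using fit_bound[OF v] e_def by simp
  have en: "e \<le> n" using card_Exl_n[OF v] e_def by simp
  have "\<not> e < k" using W_strict[of e k] fb f k by linarith
  hence ek: "k \<le> e" by simp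
  show ?thesis
  proof (cases "k = 0")
    case True
    hence "cplx Y = 0" using c by simp
    hence "Y = None" by (simp add: cplx_0_iff)
    hence "fit F w Y = 0" using Exl_sub[of F "[]"] by (simp add: fit_Exl)
    thus ?thesis using True `Y = None` by (simp add: objvec_def tgt_W cplx_def)
  next
    case False
    have "2 * e - 1 \<le> cplx Y" using cplx_bound e_def by simp
    hence "e \<le> k" using c False by simp
    hence "e = k" using ek by simp
    thus ?thesis using fb f c `2 * e - 1 \<le> cplx Y` by (simp add: objvec_def tgt_W)
  qed
qed

lemma canon_props: "k \<le> n \<Longrightarrow> valid (canon k) \<and> fit F w (canon k) = W k \<and> cplx (canon k) = 2 * k - 1"
proof -
  assume k: "k \<le> n"
  have "set (leaflist (canon k)) \<subseteq> terminals n" using k by (auto simp: leaflist_canon Pos_terminals)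
  moreover have "fit F w (canon k) = W k"
    by (simp add: fit_Exl Exl_pd[OF pd_canon] posv_canon W_def)
  moreover have "cplx (canon k) = 2 * k - 1" by (simp add: cplx_len leaflist_canon)
  ultimately show ?thesis by (simp add: valid_tree_def)
qed

lemma pareto_tgt: "pareto_optimal n F w X \<Longrightarrow> \<exists>k\<le>n. objvec F w X = tgt w k"
proof -
  assume po: "pareto_optimal n F w X"
  hence v: "valid X" by (simp add: pareto_optimal_def)
  define e where "e = card (Exl F (leaflist X))"
  have fb: "fit F w X \<le> W e" using fit_bound[OF v] e_def by simp
  have en: "e \<le> n" using card_Exl_n[OF v] e_def by simp
  have cb: "2 * e - 1 \<le> cplx X" using cplx_bound e_def by simp
  have ns: "\<not> strictly_dom F w (canon e) X" using po canon_props[OF en] by (auto simp: pareto_optimal_def)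
  have cp: "fit F w (canon e) = W e" "cplx (canon e) = 2 * e - 1" using canon_props[OF en] by auto
  have f: "fit F w X = W e"
  proof (rule ccontr)
    assume "fit F w X \<noteq> W e"
    hence "fit F w X < W e" using fb by simp
    hence "strictly_dom F w (canon e) X" using cp cb unfolding strictly_dom_def weakly_dom_def by simp
    thus False using ns by simp
  qed
  have c: "cplx X = 2 * e - 1"
  proof (rule ccontr)
    assume "cplx X \<noteq> 2 * e - 1"
    hence "cplx X > 2 * e - 1" using cb by simp
    hence "strictly_dom F w (canon e) X" using cp f unfolding strictly_dom_def weakly_dom_def by simp
    thus False using ns by simp
  qed
  show ?thesis using en f c by (intro exI[of _ e]) (simp add: objvec_def tgt_W)
qed

definition covered_upto :: "stree option set \<Rightarrow> nat \<Rightarrow> bool" where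
  "covered_upto P k \<longleftrightarrow> (\<forall>k'\<le>k. \<exists>Z\<in>P. objvec F w Z = tgt w k')"

lemma cov_front: "covered_upto P n \<Longrightarrow> covers_front n F w P"
  unfolding covers_front_def pareto_front_def
proof
  fix v assume cu: "covered_upto P n" and "v \<in> objvec F w ` {X. pareto_optimal n F w X}"
  then obtain X where po: "pareto_optimal n F w X" and v: "v = objvec F w X" by blast
  obtain k where k: "k \<le> n" "objvec F w X = tgt w k" using pareto_tgt[OF po] by blast
  obtain Z where "Z \<in> P" "objvec F w Z = tgt w k" using cu k unfolding covered_upto_def by blast
  thus "\<exists>X\<in>P. objvec F w X = v" using v k by metis
qed

end


context setting begin

definition mut :: "lit list \<Rightarrow> lit list \<Rightarrow> bool" where
  "mut xs ys \<longleftrightarrow> ys = xs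
     \<or> (\<exists>a x b u. xs = a @ x # b \<and> ys = a @ u # b \<and> u \<in> terminals n)
     \<or> (\<exists>a b u. xs = a @ b \<and> ys = a @ u # b \<and> u \<in> terminals n)
     \<or> (\<exists>a x b. xs = a @ x # b \<and> ys = a @ b)"

lemma terminals_ne: "terminals n \<noteq> {}"
  using n1 Pos_terminals[of 1 n] by auto

lemma hvl_supp:
  assumes Y: "Y \<in> set_pmf (hvl_prime n X)"
  shows "mut (leaflist X) (leaflist Y)"
proof -
  have T: "finite (terminals n)" "terminals n \<noteq> {}" using finite_terminals terminals_ne by auto
  have "Y \<in> set_pmf (substitute n X) \<or> Y \<in> set_pmf (insert_op n X) \<or> Y \<in> set_pmf (delete_op X)"
    using Y unfolding hvl_prime_def by (auto split: if_splits)
  then consider (s) "Y \<in> set_pmf (substitute n X)" | (i) "Y \<in> set_pmf (insert_op n X)"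
    | (d) "Y \<in> set_pmf (delete_op X)" by blast
  note Yop = this
  show ?thesis
  proof (cases X)
    case None
    show ?thesis
    proof (cases rule: Yop)
      case s thus ?thesis using None by (simp add: substitute_def mut_def)
    next
      case d thus ?thesis using None by (simp add: delete_op_def mut_def)
    next
      case i
      then obtain u where "u \<in> terminals n" "Y = Some (L u)" using None T by (auto simp: insert_op_def)
      thus ?thesis using None unfolding mut_def by (intro disjI2 disjI2 disjI1 exI[of _ "[]"]) auto
    qed
  next
    case (Some t)
    have K: "finite {..<nleaves t}" "{..<nleaves t} \<noteq> {}" using nleaves_pos[of t] by (auto simp: lessThan_empty_iff)
    have K2: "finite {..<nodes t}" "{..<nodes t} \<noteq> {}" using nleaves_pos[of t] nodes_leaves[of t] by (auto simp: lessThan_empty_iff)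
    show ?thesis
    proof (cases rule: Yop)
      case s
      then obtain k u where k: "k < nleaves t" and u: "u \<in> terminals n" and Yk: "Y = Some (subst_leaf t k u)"
        using Some K T by (auto simp: substitute_def)
      have kl: "k < length (leaves t)" using k length_leaves by simp
      have "leaves t = take k (leaves t) @ leaves t ! k # drop (Suc k) (leaves t)"
        using kl by (simp add: id_take_nth_drop)
      moreover have "leaflist Y = take k (leaves t) @ u # drop (Suc k) (leaves t)"
        using Yk leaves_subst[OF k] kl by (simp add: upd_conv_take_nth_drop)
      ultimately show ?thesis using Some u unfolding mut_def by (intro disjI2 disjI1) (metis leaflist_Some)
    next
      case i
      then obtain k u c where k: "k < nodes t" and u: "u \<in> terminals n" and Yk: "Y = Some (ins_node t k u c)"
        using Some K2 T by (auto simp: insert_op_def)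
      obtain a b where "leaves t = a @ b" "leaves (ins_node t k u c) = a @ u # b" using leaves_ins[OF k] by blast
      thus ?thesis using Some u Yk unfolding mut_def by auto
    next
      case d
      then obtain k where k: "k < nleaves t" and Yk: "Y = del_leaf t k"
        using Some K by (auto simp: delete_op_def)
      have kl: "k < length (leaves t)" using k length_leaves by simp
      have "leaves t = take k (leaves t) @ leaves t ! k # drop (Suc k) (leaves t)"
        using kl by (simp add: id_take_nth_drop)
      moreover have "leaflist Y = take k (leaves t) @ drop (Suc k) (leaves t)"
        using Yk leaves_del[OF k] by simp
      ultimately show ?thesis using Some unfolding mut_def by (intro disjI2 disjI2 disjI2) (metis leaflist_Some)
    qed
  qed
qed

lemma mut_valid: "set xs \<subseteq> terminals n \<Longrightarrow> mut xs ys \<Longrightarrow> set ys \<subseteq> terminals n"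
  unfolding mut_def
proof (elim disjE exE conjE)
qed simp_all

lemma wnonneg: "i \<in> {1..n} \<Longrightarrow> 0 \<le> w i"
  using wpos'[of i] by simp

lemma sum_posv_mono: "set ys \<subseteq> terminals n \<Longrightarrow> A \<subseteq> posv ys \<Longrightarrow> sum w A \<le> sum w (posv ys)"
proof -
  assume v: "set ys \<subseteq> terminals n" and A: "A \<subseteq> posv ys"
  have "posv ys \<subseteq> {1..n}" using posv_terminals[OF v] .
  hence "\<forall>b\<in>posv ys - A. 0 \<le> w b" using wnonneg by blast
  thus ?thesis using sum_mono2[OF finite_posv A] by blast
qed

lemma pd_ins: "pd (a @ b) \<Longrightarrow> i \<notin> posv a \<Longrightarrow> i \<notin> posv b \<Longrightarrow> pd (a @ Pos i # b)"
  unfolding pd_def posv_def ispos_def by auto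

lemma pd_del: "pd (a @ x # b) \<Longrightarrow> pd (a @ b)"
  unfolding pd_def by auto

lemma pd_u: "pd (a @ b) \<Longrightarrow> \<not> pd (a @ u # b) \<Longrightarrow> posv [u] \<subseteq> posv a \<union> posv b"
proof (cases u)
  case (Pos i)
  assume p: "pd (a @ b)" and np: "\<not> pd (a @ u # b)"
  show ?thesis
  proof (rule ccontr)
    assume "\<not> ?thesis"
    hence "i \<notin> posv a" "i \<notin> posv b" using Pos by auto
    hence "pd (a @ u # b)" using pd_ins[OF p] Pos by simp
    thus False using np by simp
  qed
qed simp

lemma mut_dom:
  assumes p: "pd xs" and v: "set xs \<subseteq> terminals n" and m: "mut xs ys"
  shows "pd ys \<or> (sum w (Exl F ys) < sum w (Exl F xs) \<and> length ys = length xs)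
           \<or> (sum w (Exl F ys) \<le> sum w (Exl F xs) \<and> length xs < length ys)"
proof -
  have v': "set ys \<subseteq> terminals n" using mut_valid[OF v m] .
  have EL: "Exl F xs = posv xs" using Exl_pd[OF p] .
  have s1: "sum w (Exl F ys) \<le> sum w (posv ys)" using sum_posv_mono[OF v' Exl_sub] .
  consider (eq) "ys = xs" | (sub) a x b u where "xs = a @ x # b" "ys = a @ u # b" "u \<in> terminals n"
    | (ins) a b u where "xs = a @ b" "ys = a @ u # b" "u \<in> terminals n"
    | (del) a x b where "xs = a @ x # b" "ys = a @ b"
    using m unfolding mut_def by metis
  thus ?thesis
  proof cases
    case eq thus ?thesis using p by simp
  next
    case del thus ?thesis using p pd_del by simp
  next
    case (sub a x b u)
    show ?thesis
    proof (cases "pd ys")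
      case False
      have px: "pd (a @ x # b)" using p sub by simp
      obtain j where x: "x = Pos j" using px by (auto simp: pd_def ispos_def)
      have pab: "pd (a @ b)" using pd_del[OF px] .
      have jn: "j \<notin> posv a \<union> posv b" using px x by (auto simp: pd_def posv_def)
      have u: "posv [u] \<subseteq> posv a \<union> posv b" using pd_u[OF pab] False sub by simp
      have PL: "posv xs = insert j (posv a \<union> posv b)" using sub x by simp
      have sub2: "posv ys \<subseteq> posv a \<union> posv b" using sub u by auto
      have jv: "j \<in> {1..n}" using posv_terminals[OF v] PL by auto
      have ab: "posv a \<union> posv b \<subseteq> posv ys \<union> (posv a \<union> posv b)" by blast
      have "\<forall>i\<in>(posv a \<union> posv b) - posv ys. 0 \<le> w i"
        using posv_terminals[OF v] PL wnonneg by blast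
      hence "sum w (posv ys) \<le> sum w (posv a \<union> posv b)"
        using sum_mono2[of "posv a \<union> posv b" "posv ys" w] sub2 by simp
      also have "\<dots> < sum w (posv xs)" using PL jn wpos'[of j] jv by simp
      finally show ?thesis using s1 EL sub by simp
    qed simp
  next
    case (ins a b u)
    show ?thesis
    proof (cases "pd ys")
      case False
      have u: "posv [u] \<subseteq> posv a \<union> posv b" using pd_u[of a b u] p ins False by simp
      have "posv ys = posv xs" using ins u by auto
      thus ?thesis using s1 EL ins by simp
    qed simp
  qed
qed

lemma nonred_iff: "non_redundant F X \<longleftrightarrow> card (Exl F (leaflist X)) = length (leaflist X)"
proof (cases X)
  case None
  thus ?thesis using Exl_sub[of F "[]"] by (simp add: non_redundant_def)
next
  case (Some t)
  have "length (leaflist X) \<ge> 1" using Some leaflist_Some_ne[of t] by (cases "leaflist X") auto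
  thus ?thesis using Some by (auto simp: non_redundant_def expressed_Ex cplx_len)
qed

lemma nonred_pd: "non_redundant F X \<longleftrightarrow> pd (leaflist X)"
proof
  assume "non_redundant F X"
  thus "pd (leaflist X)" using nonred_iff card_Ex_eq by blast
next
  assume p: "pd (leaflist X)"
  have "card (Exl F (leaflist X)) = length (leaflist X)" using Exl_pd[OF p] card_posv_pd[OF p] by simp
  thus "non_redundant F X" using nonred_iff by blast
qed

lemma hvl_dom:
  assumes v: "valid X" and nr: "non_redundant F X" and Y: "Y \<in> set_pmf (hvl_prime n X)"
  shows "valid Y \<and> (non_redundant F Y \<or> strictly_dom F w X Y)"
proof -
  have m: "mut (leaflist X) (leaflist Y)" using hvl_supp[OF Y] .
  have vY: "valid Y" using mut_valid[OF _ m] v by (simp add: valid_tree_def)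
  have d: "pd (leaflist Y) \<or> (fit F w Y < fit F w X \<and> length (leaflist Y) = length (leaflist X))
           \<or> (fit F w Y \<le> fit F w X \<and> length (leaflist X) < length (leaflist Y))"
    using mut_dom[OF _ _ m] nr v unfolding fit_Exl nonred_pd valid_tree_def by blast
  have "non_redundant F Y \<or> strictly_dom F w X Y"
    using d unfolding nonred_pd strictly_dom_def weakly_dom_def cplx_len by auto
  thus ?thesis using vY by simp
qed

end


context setting begin

definition upd :: "stree option set \<Rightarrow> stree option \<Rightarrow> stree option set" where
  "upd P Y = (if (\<exists>Z\<in>P. strictly_dom F w Z Y) then P
                 else (P - {Z\<in>P. weakly_dom F w Y Z}) \<union> {Y})"

lemma smo_step_eq: "smo_step n F w P =
   bind_pmf (pmf_of_set P) (\<lambda>X. bind_pmf (hvl_prime n X) (\<lambda>Y. return_pmf (upd P Y)))"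
  by (simp add: smo_step_def upd_def)

lemma smo_supp: "finite P \<Longrightarrow> P \<noteq> {} \<Longrightarrow> P' \<in> set_pmf (smo_step n F w P) \<Longrightarrow>
    \<exists>X\<in>P. \<exists>Y\<in>set_pmf (hvl_prime n X). P' = upd P Y"
  unfolding smo_step_eq by auto

definition Inv :: "stree option set \<Rightarrow> bool" where
  "Inv P \<longleftrightarrow> finite P \<and> P \<noteq> {} \<and> (\<forall>Z\<in>P. valid Z \<and> non_redundant F Z)
      \<and> (\<forall>Z1\<in>P. \<forall>Z2\<in>P. Z1 \<noteq> Z2 \<longrightarrow> \<not> weakly_dom F w Z1 Z2)"

lemma wd_refl: "weakly_dom F w Z Z" by (simp add: weakly_dom_def)

lemma U1: "Z \<in> P \<Longrightarrow> \<exists>Z'\<in>upd P Y. weakly_dom F w Z' Z"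
proof -
  assume Z: "Z \<in> P"
  show ?thesis
  proof (cases "\<exists>Z\<in>P. strictly_dom F w Z Y")
    case True thus ?thesis using Z wd_refl unfolding upd_def by auto
  next
    case False
    show ?thesis
    proof (cases "weakly_dom F w Y Z")
      case True
      have "Y \<in> upd P Y" using False unfolding upd_def by simp
      thus ?thesis using True by blast
    next
      case f2: False
      have "Z \<in> upd P Y" using False f2 Z unfolding upd_def by simp
      thus ?thesis using wd_refl by blast
    qed
  qed
qed

lemma U2: "upd P Y \<subseteq> P \<union> {Y}" unfolding upd_def by auto

lemma U3: "\<not> (\<exists>Z\<in>P. strictly_dom F w Z Y) \<Longrightarrow> Y \<in> upd P Y" unfolding upd_def by auto

lemma Inv_upd:
  assumes I: "Inv P" and X: "X \<in> P" and Y: "Y \<in> set_pmf (hvl_prime n X)"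
  shows "Inv (upd P Y)"
proof (cases "\<exists>Z\<in>P. strictly_dom F w Z Y")
  case True thus ?thesis using I by (simp add: upd_def)
next
  case False
  have hd: "valid Y \<and> (non_redundant F Y \<or> strictly_dom F w X Y)"
    using hvl_dom Y X I unfolding Inv_def by blast
  hence nY: "valid Y" "non_redundant F Y" using False X by auto
  define P' where "P' = (P - {Z\<in>P. weakly_dom F w Y Z}) \<union> {Y}"
  have u: "upd P Y = P'" using False by (simp add: upd_def P'_def)
  have a: "\<not> weakly_dom F w Z Y" if "Z \<in> P" "\<not> weakly_dom F w Y Z" for Z
  proof
    assume "weakly_dom F w Z Y"
    moreover have "\<not> strictly_dom F w Z Y" using False that by blast
    ultimately have "weakly_dom F w Y Z" unfolding strictly_dom_def weakly_dom_def by auto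
    thus False using that by simp
  qed
  have "Inv P'"
    unfolding Inv_def
  proof (intro conjI)
    show "finite P'" using I by (simp add: P'_def Inv_def)
    show "P' \<noteq> {}" by (simp add: P'_def)
    have IP: "\<forall>Z\<in>P. valid Z \<and> non_redundant F Z" using I by (simp add: Inv_def)
    show "\<forall>Z\<in>P'. valid Z \<and> non_redundant F Z"
    proof
      fix Z assume "Z \<in> P'"
      hence "Z \<in> P \<or> Z = Y" by (auto simp: P'_def)
      thus "valid Z \<and> non_redundant F Z" using IP nY by blast
    qed
    have AC: "\<forall>Z1\<in>P. \<forall>Z2\<in>P. Z1 \<noteq> Z2 \<longrightarrow> \<not> weakly_dom F w Z1 Z2" using I by (simp add: Inv_def)
    show "\<forall>Z1\<in>P'. \<forall>Z2\<in>P'. Z1 \<noteq> Z2 \<longrightarrow> \<not> weakly_dom F w Z1 Z2"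
    proof (intro ballI impI)
      fix Z1 Z2 assume z1: "Z1 \<in> P'" and z2: "Z2 \<in> P'" and ne: "Z1 \<noteq> Z2"
      have m1: "Z1 = Y \<or> (Z1 \<in> P \<and> \<not> weakly_dom F w Y Z1)" using z1 by (auto simp: P'_def)
      have m2: "Z2 = Y \<or> (Z2 \<in> P \<and> \<not> weakly_dom F w Y Z2)" using z2 by (auto simp: P'_def)
      show "\<not> weakly_dom F w Z1 Z2"
      proof (cases "Z1 = Y")
        case True
        hence "Z2 \<in> P \<and> \<not> weakly_dom F w Y Z2" using m2 ne by blast
        thus ?thesis using True by simp
      next
        case f1: False
        hence z1P: "Z1 \<in> P" "\<not> weakly_dom F w Y Z1" using m1 by auto
        show ?thesis
        proof (cases "Z2 = Y")
          case True thus ?thesis using a[OF z1P] by simp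
        next
          case False
          hence "Z2 \<in> P" using m2 by blast
          thus ?thesis using AC z1P ne by blast
        qed
      qed
    qed
  qed
  thus ?thesis using u by simp
qed

lemma Inv_smo: "Inv P \<Longrightarrow> P' \<in> set_pmf (smo_step n F w P) \<Longrightarrow> Inv P'"
proof -
  assume I: "Inv P" and P': "P' \<in> set_pmf (smo_step n F w P)"
  have "finite P" "P \<noteq> {}" using I by (auto simp: Inv_def)
  then obtain X Y where "X \<in> P" "Y \<in> set_pmf (hvl_prime n X)" "P' = upd P Y" using smo_supp P' by blast
  thus ?thesis using Inv_upd I by simp
qed

lemma card_Inv: "Inv P \<Longrightarrow> card P \<le> Suc n"
proof -
  assume I: "Inv P"
  define f where "f Z = card (Exl F (leaflist Z))" for Z
  have inj: "inj_on f P"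
  proof (rule inj_onI)
    fix Z1 Z2 assume z: "Z1 \<in> P" "Z2 \<in> P" "f Z1 = f Z2"
    have "non_redundant F Z1" "non_redundant F Z2" using z I unfolding Inv_def by auto
    hence "length (leaflist Z1) = length (leaflist Z2)"
      using z(3) nonred_iff unfolding f_def by simp
    hence c: "cplx Z1 = cplx Z2" by (simp add: cplx_len)
    show "Z1 = Z2"
    proof (rule ccontr)
      assume ne: "Z1 \<noteq> Z2"
      have "weakly_dom F w Z1 Z2 \<or> weakly_dom F w Z2 Z1" using c unfolding weakly_dom_def by linarith
      moreover have "\<not> weakly_dom F w Z1 Z2" "\<not> weakly_dom F w Z2 Z1" using I z ne unfolding Inv_def by auto
      ultimately show False by blast
    qed
  qed
  have "f ` P \<subseteq> {0..n}" using I card_Exl_n unfolding Inv_def f_def by auto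
  hence "card (f ` P) \<le> Suc n" using card_mono[of "{0..n}" "f ` P"] by simp
  thus ?thesis using card_image[OF inj] by simp
qed

end


context setting begin

definition phiA :: "stree option set \<Rightarrow> nat" where
  "phiA P = card {c\<in>{..<2*n}. \<exists>Z\<in>P. cplx Z \<le> c}"

definition phiB :: "stree option set \<Rightarrow> nat" where
  "phiB P = card {k\<in>{1..n}. covered_upto P k}"

definition phi :: "stree option set \<Rightarrow> nat" where
  "phi P = (if None \<in> P then 2*n + phiB P else phiA P)"

lemma phiA_le: "phiA P \<le> 2*n"
proof -
  have "phiA P \<le> card {..<2*n}" unfolding phiA_def by (rule card_mono) auto
  thus ?thesis by simp
qed

lemma phiB_le: "phiB P \<le> n"
proof -
  have "phiB P \<le> card {1..n}" unfolding phiB_def by (rule card_mono) auto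
  thus ?thesis by simp
qed

lemma phi_le: "phi P \<le> 3*n"
  using phiA_le[of P] phiB_le[of P] by (simp add: phi_def)

lemma phiA_lt: "None \<notin> P \<Longrightarrow> phiA P < 2*n"
proof -
  assume N: "None \<notin> P"
  have "{c\<in>{..<2*n}. \<exists>Z\<in>P. cplx Z \<le> c} \<subseteq> {..<2*n} - {0}"
  proof
    fix c assume c: "c \<in> {c\<in>{..<2*n}. \<exists>Z\<in>P. cplx Z \<le> c}"
    then obtain Z where Z: "Z \<in> P" "cplx Z \<le> c" by blast
    have "c \<noteq> 0"
    proof
      assume "c = 0"
      hence "Z = None" using Z cplx_0_iff by simp
      thus False using Z N by simp
    qed
    thus "c \<in> {..<2*n} - {0}" using c by simp
  qed
  hence "phiA P \<le> card ({..<2*n} - {0})" unfolding phiA_def by (rule card_mono[rotated]) simp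
  also have "\<dots> = 2*n - 1" using n1 by simp
  finally show ?thesis using n1 by simp
qed

lemma tr_None:
  assumes D: "\<forall>Z\<in>P. \<exists>Z'\<in>P'. weakly_dom F w Z' Z" and N: "None \<in> P"
  shows "None \<in> P'"
proof -
  obtain Z' where "Z' \<in> P'" "weakly_dom F w Z' None" using D N by blast
  moreover hence "cplx Z' = 0" by (simp add: weakly_dom_def cplx_def)
  ultimately show ?thesis using cplx_0_iff by auto
qed

lemma tr_cov:
  assumes D: "\<forall>Z\<in>P. \<exists>Z'\<in>P'. weakly_dom F w Z' Z" and V: "\<forall>Z\<in>P'. valid Z"
    and c: "covered_upto P k" and k: "k \<le> n"
  shows "covered_upto P' k"
  unfolding covered_upto_def
proof (intro allI impI)
  fix k' assume k': "k' \<le> k"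
  obtain Z where Z: "Z \<in> P" "objvec F w Z = tgt w k'" using c k' unfolding covered_upto_def by blast
  obtain Z' where Z': "Z' \<in> P'" "weakly_dom F w Z' Z" using D Z by blast
  have "W k' \<le> fit F w Z'" "cplx Z' \<le> 2 * k' - 1"
    using Z(2) Z'(2) unfolding weakly_dom_def objvec_def tgt_W by auto
  hence "objvec F w Z' = tgt w k'" using tgt_opt V Z'(1) k k' by simp
  thus "\<exists>Z\<in>P'. objvec F w Z = tgt w k'" using Z' by blast
qed

lemma tr_phiA:
  assumes D: "\<forall>Z\<in>P. \<exists>Z'\<in>P'. weakly_dom F w Z' Z"
  shows "phiA P \<le> phiA P'"
  unfolding phiA_def
proof (rule card_mono)
  show "{c \<in> {..<2 * n}. \<exists>Z\<in>P. cplx Z \<le> c} \<subseteq> {c \<in> {..<2 * n}. \<exists>Z\<in>P'. cplx Z \<le> c}"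
  proof
    fix c assume "c \<in> {c \<in> {..<2 * n}. \<exists>Z\<in>P. cplx Z \<le> c}"
    then obtain Z where "c < 2*n" "Z \<in> P" "cplx Z \<le> c" by blast
    moreover then obtain Z' where "Z' \<in> P'" "weakly_dom F w Z' Z" using D by blast
    ultimately have "c < 2*n" "Z' \<in> P'" "cplx Z' \<le> c" unfolding weakly_dom_def by auto
    thus "c \<in> {c \<in> {..<2 * n}. \<exists>Z\<in>P'. cplx Z \<le> c}" by blast
  qed
qed simp

lemma tr_phiB:
  assumes D: "\<forall>Z\<in>P. \<exists>Z'\<in>P'. weakly_dom F w Z' Z" and V: "\<forall>Z\<in>P'. valid Z"
  shows "phiB P \<le> phiB P'"
  unfolding phiB_def
proof (rule card_mono)
  show "{k \<in> {1..n}. covered_upto P k} \<subseteq> {k \<in> {1..n}. covered_upto P' k}"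
    using tr_cov[OF D V] by auto
qed simp

lemma tr_phi:
  assumes D: "\<forall>Z\<in>P. \<exists>Z'\<in>P'. weakly_dom F w Z' Z" and V: "\<forall>Z\<in>P'. valid Z"
  shows "phi P \<le> phi P'"
proof (cases "None \<in> P")
  case True
  hence "None \<in> P'" using tr_None[OF D] by simp
  thus ?thesis using True tr_phiB[OF D V] by (simp add: phi_def)
next
  case False
  show ?thesis
  proof (cases "None \<in> P'")
    case True thus ?thesis using False phiA_le[of P] by (simp add: phi_def)
  next
    case f2: False thus ?thesis using False tr_phiA[OF D] by (simp add: phi_def)
  qed
qed

lemma mono_step:
  assumes I: "Inv P" and P': "P' \<in> set_pmf (smo_step n F w P)"
  shows "phi P \<le> phi P'"
proof -
  have "finite P" "P \<noteq> {}" using I by (auto simp: Inv_def)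
  then obtain X Y where "X \<in> P" "Y \<in> set_pmf (hvl_prime n X)" "P' = upd P Y" using smo_supp P' by blast
  moreover have "Inv P'" using Inv_smo[OF I P'] .
  ultimately show ?thesis using tr_phi U1 unfolding Inv_def by metis
qed

end


lemma L3:
  assumes "\<And>x. x \<in> B \<Longrightarrow> q \<le> emeasure (measure_pmf (f x)) A"
  shows "emeasure (measure_pmf M) B * q \<le> emeasure (measure_pmf (bind_pmf M f)) A"
proof -
  have "emeasure (measure_pmf M) B * q = (\<integral>\<^sup>+x. q * indicator B x \<partial>measure_pmf M)"
    by (simp add: nn_integral_cmult_indicator mult.commute)
  also have "\<dots> \<le> (\<integral>\<^sup>+x. emeasure (measure_pmf (f x)) A \<partial>measure_pmf M)"
    by (rule nn_integral_mono) (use assms in \<open>auto split: split_indicator\<close>)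
  also have "\<dots> = emeasure (measure_pmf (bind_pmf M f)) A" by simp
  finally show ?thesis .
qed

lemma L3r:
  assumes p: "0 \<le> p" "ennreal p \<le> emeasure (measure_pmf M) B"
    and q: "0 \<le> q" "\<And>x. x \<in> B \<Longrightarrow> ennreal q \<le> emeasure (measure_pmf (f x)) A"
  shows "ennreal (p * q) \<le> emeasure (measure_pmf (bind_pmf M f)) A"
proof -
  have "ennreal (p * q) = ennreal p * ennreal q" using p q by (simp add: ennreal_mult)
  also have "\<dots> \<le> emeasure (measure_pmf M) B * ennreal q" by (rule mult_right_mono) (use p in auto)
  also have "\<dots> \<le> emeasure (measure_pmf (bind_pmf M f)) A" by (rule L3) (use q in auto)
  finally show ?thesis .
qed

lemma em_all: "set_pmf M \<subseteq> A \<Longrightarrow> ennreal 1 \<le> emeasure (measure_pmf M) A"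
proof -
  assume "set_pmf M \<subseteq> A"
  hence "emeasure (measure_pmf M) (set_pmf M) \<le> emeasure (measure_pmf M) A" by (rule emeasure_mono) simp
  thus ?thesis by (simp add: emeasure_pmf)
qed

lemma em_single: "finite S \<Longrightarrow> x \<in> S \<Longrightarrow> ennreal (1 / real (card S)) \<le> emeasure (measure_pmf (pmf_of_set S)) {x}"
proof -
  assume S: "finite S" "x \<in> S"
  hence ne: "S \<noteq> {}" by auto
  have "emeasure (measure_pmf (pmf_of_set S)) {x} = ennreal (pmf (pmf_of_set S) x)" by (rule emeasure_pmf_single)
  also have "pmf (pmf_of_set S) x = 1 / real (card S)" using S ne by simp
  finally show ?thesis by simp
qed

lemma bind_ret: "ennreal q \<le> emeasure (measure_pmf M) {Y. g Y \<in> G} \<Longrightarrow> 0 \<le> q \<Longrightarrow>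
   ennreal q \<le> emeasure (measure_pmf (bind_pmf M (\<lambda>Y. return_pmf (g Y)))) G"
  using L3r[of q M "{Y. g Y \<in> G}" 1 "\<lambda>Y. return_pmf (g Y)" G] by simp

lemma first_fail: "Q 0 \<Longrightarrow> \<not> Q m \<Longrightarrow> \<exists>k<m. Q k \<and> \<not> Q (Suc k)"
proof (induction m)
  case 0 thus ?case by simp
next
  case (Suc m)
  show ?case
  proof (cases "Q m")
    case True thus ?thesis using Suc by auto
  next
    case False thus ?thesis using Suc by (metis less_Suc_eq)
  qed
qed

context setting begin

lemma hvl_op:
  fixes op :: nat
  assumes "ennreal q \<le> emeasure (measure_pmf (if op = 0 then substitute n X else if op = 1 then insert_op n X else delete_op X)) A"
    and "op \<in> {0,1,2}" "0 \<le> q"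
  shows "ennreal (1/3 * q) \<le> emeasure (measure_pmf (hvl_prime n X)) A"
proof -
  define f where "f = (\<lambda>op. if op = (0::nat) then substitute n X else if op = 1 then insert_op n X else delete_op X)"
  have a: "ennreal (1/3) \<le> emeasure (measure_pmf (pmf_of_set {0::nat, 1, 2})) {op}"
    using em_single[of "{0::nat,1,2}" op] assms(2) by auto
  have b: "\<And>x. x \<in> {op} \<Longrightarrow> ennreal q \<le> emeasure (measure_pmf (f x)) A" using assms(1) by (simp add: f_def)
  have "ennreal (1/3 * q) \<le> emeasure (measure_pmf (bind_pmf (pmf_of_set {0::nat, 1, 2}) f)) A"
    by (rule L3r[OF _ a assms(3) b]) simp
  thus ?thesis unfolding hvl_prime_def f_def .
qed

end


context setting begin

lemma setA_mono:
  assumes D: "\<forall>Z\<in>P. \<exists>Z'\<in>P'. weakly_dom F w Z' Z"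
  shows "{c \<in> {..<2 * n}. \<exists>Z\<in>P. cplx Z \<le> c} \<subseteq> {c \<in> {..<2 * n}. \<exists>Z\<in>P'. cplx Z \<le> c}"
proof
  fix c assume "c \<in> {c \<in> {..<2 * n}. \<exists>Z\<in>P. cplx Z \<le> c}"
  then obtain Z where "c < 2*n" "Z \<in> P" "cplx Z \<le> c" by blast
  moreover then obtain Z' where "Z' \<in> P'" "weakly_dom F w Z' Z" using D by blast
  ultimately have "c < 2*n" "Z' \<in> P'" "cplx Z' \<le> c" unfolding weakly_dom_def by auto
  thus "c \<in> {c \<in> {..<2 * n}. \<exists>Z\<in>P'. cplx Z \<le> c}" by blast
qed

lemma cplx_nonred_le: "valid Z \<Longrightarrow> non_redundant F Z \<Longrightarrow> cplx Z \<le> 2*n - 1"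
proof -
  assume v: "valid Z" and nr: "non_redundant F Z"
  have "length (leaflist Z) \<le> n" using nonred_iff nr card_Exl_n[OF v] by simp
  thus ?thesis by (simp add: cplx_len)
qed

lemma progA:
  assumes I: "Inv P" and N: "None \<notin> P" and Xm: "Xm \<in> P" and min: "\<forall>Z\<in>P. cplx Xm \<le> cplx Z"
    and Y: "Y \<in> set_pmf (delete_op Xm)"
  shows "phi P + 1 \<le> phi (upd P Y)"
proof -
  obtain t where t: "Xm = Some t" using Xm N by (cases Xm) auto
  have ne: "{..<nleaves t} \<noteq> {}" using nleaves_pos[of t] by (auto simp: lessThan_empty_iff)
  obtain k where k: "k < nleaves t" and Yk: "Y = del_leaf t k"
    using Y ne t by (auto simp: delete_op_def)
  have kl: "k < length (leaves t)" using k length_leaves by simp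
  have "length (leaflist Y) = length (leaves t) - 1" using leaves_del[OF k] kl Yk by simp
  moreover have "length (leaves t) \<ge> 1" using kl by simp
  ultimately have cY: "cplx Y < cplx Xm" using t by (simp add: cplx_len)
  have ns: "\<not> (\<exists>Z\<in>P. strictly_dom F w Z Y)"
  proof
    assume "\<exists>Z\<in>P. strictly_dom F w Z Y"
    then obtain Z where "Z \<in> P" "cplx Z \<le> cplx Y" by (auto simp: strictly_dom_def weakly_dom_def)
    thus False using min cY by fastforce
  qed
  have YP: "Y \<in> upd P Y" using U3[OF ns] .
  have D: "\<forall>Z\<in>P. \<exists>Z'\<in>upd P Y. weakly_dom F w Z' Z" using U1 by blast
  show ?thesis
  proof (cases "Y = None")
    case True
    hence "None \<in> upd P Y" using YP by simp
    hence "phi (upd P Y) \<ge> 2*n" by (simp add: phi_def)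
    moreover have "phi P < 2*n" using phiA_lt[OF N] N by (simp add: phi_def)
    ultimately show ?thesis by simp
  next
    case False
    have N': "None \<notin> upd P Y" using U2[of P Y] N False by blast
    define S where "S = {c \<in> {..<2 * n}. \<exists>Z\<in>P. cplx Z \<le> c}"
    define S' where "S' = {c \<in> {..<2 * n}. \<exists>Z\<in>upd P Y. cplx Z \<le> c}"
    have sub: "S \<subseteq> S'" unfolding S_def S'_def using setA_mono[OF D] .
    have "cplx Xm \<le> 2*n - 1" using cplx_nonred_le I Xm unfolding Inv_def by blast
    hence "cplx Y < 2*n" using cY by simp
    hence inS': "cplx Y \<in> S'" using YP unfolding S'_def by blast
    have notS: "cplx Y \<notin> S"
    proof
      assume "cplx Y \<in> S"
      then obtain Z where "Z \<in> P" "cplx Z \<le> cplx Y" unfolding S_def by blast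
      thus False using min cY by fastforce
    qed
    have "S \<subset> S'" using sub inS' notS by blast
    hence "card S < card S'" by (rule psubset_card_mono[rotated]) (simp add: S'_def)
    thus ?thesis using N N' by (simp add: phi_def phiA_def S_def S'_def)
  qed
qed

lemma progB:
  assumes I: "Inv P" and N: "None \<in> P" and kn: "k < n" and Z: "Z \<in> P" and oZ: "objvec F w Z = tgt w k"
    and nc: "\<not> covered_upto P (Suc k)" and cv: "covered_upto P k"
    and i: "1 \<le> i" "i \<le> Suc k" "i \<notin> posv (leaflist Z)"
    and ab: "leaflist Z = a @ b" "leaflist Y = a @ Pos i # b"
  shows "phi P + 1 \<le> phi (upd P Y)"
proof -
  have IP: "\<forall>Z\<in>P. valid Z \<and> non_redundant F Z" using I by (simp add: Inv_def)
  have vZ: "valid Z" and nrZ: "non_redundant F Z" using IP Z by auto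
  have pZ: "pd (leaflist Z)" using nrZ nonred_pd by simp
  have EZ: "Exl F (leaflist Z) = posv (leaflist Z)" using Exl_pd[OF pZ] .
  have lenZ: "length (leaflist Z) = card (posv (leaflist Z))" using card_posv_pd[OF pZ] by simp
  have cZ: "cplx Z = 2*k - 1" and fZ: "fit F w Z = W k" using oZ by (auto simp: objvec_def tgt_W)
  have lk: "length (leaflist Z) = k" using cZ by (simp add: cplx_len)
  have fZ': "sum w (posv (leaflist Z)) = W k" using fZ EZ by (simp add: fit_Exl)
  have ia: "i \<notin> posv a" "i \<notin> posv b" using i(3) ab(1) by auto
  have pab: "pd (a @ b)" using pZ ab(1) by simp
  have pY: "pd (leaflist Y)" using pd_ins[OF pab ia] ab(2) by simp
  have EY: "Exl F (leaflist Y) = insert i (posv (leaflist Z))" using Exl_pd[OF pY] ab by auto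
  have fY: "fit F w Y = w i + W k" using EY i(3) fZ' by (simp add: fit_Exl)
  have "w (Suc k) \<le> w i" using wmono[of i "Suc k"] i kn by simp
  hence fY': "W (Suc k) \<le> fit F w Y" using fY W_Suc[of k] by simp
  have "length (leaflist Y) = Suc k" using ab lk by simp
  hence cY: "cplx Y = 2 * Suc k - 1" by (simp add: cplx_len)
  have "set (leaflist Z) \<subseteq> terminals n" using vZ by (simp add: valid_tree_def)
  moreover have "Pos i \<in> terminals n" using Pos_terminals i kn by simp
  ultimately have vY: "valid Y" using ab by (auto simp: valid_tree_def)
  have oY: "objvec F w Y = tgt w (Suc k)" using tgt_opt[OF vY _ fY'] cY kn by simp
  have ns: "\<not> (\<exists>Z'\<in>P. strictly_dom F w Z' Y)"
  proof
    assume "\<exists>Z'\<in>P. strictly_dom F w Z' Y"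
    then obtain Z' where Z': "Z' \<in> P" "strictly_dom F w Z' Y" by blast
    have "W (Suc k) \<le> fit F w Z'" "cplx Z' \<le> 2 * Suc k - 1"
      using Z'(2) fY' cY unfolding strictly_dom_def weakly_dom_def by auto
    hence "objvec F w Z' = tgt w (Suc k)" using tgt_opt IP Z'(1) kn by simp
    hence "fit F w Z' = fit F w Y" "cplx Z' = cplx Y" using oY by (auto simp: objvec_def tgt_W)
    thus False using Z'(2) unfolding strictly_dom_def by simp
  qed
  have YP: "Y \<in> upd P Y" using U3[OF ns] .
  have D: "\<forall>Z\<in>P. \<exists>Z'\<in>upd P Y. weakly_dom F w Z' Z" using U1 by blast
  have V: "\<forall>Z\<in>upd P Y. valid Z"
  proof
    fix Z' assume "Z' \<in> upd P Y"
    hence "Z' \<in> P \<or> Z' = Y" using U2 by blast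
    thus "valid Z'" using IP vY by blast
  qed
  have N': "None \<in> upd P Y" using tr_None[OF D N] .
  have cv': "covered_upto (upd P Y) (Suc k)"
    unfolding covered_upto_def
  proof (intro allI impI)
    fix k' assume k': "k' \<le> Suc k"
    show "\<exists>Z\<in>upd P Y. objvec F w Z = tgt w k'"
    proof (cases "k' = Suc k")
      case True thus ?thesis using YP oY by blast
    next
      case False
      hence "k' \<le> k" using k' by simp
      thus ?thesis using tr_cov[OF D V cv] kn unfolding covered_upto_def by simp
    qed
  qed
  define S where "S = {k\<in>{1..n}. covered_upto P k}"
  define S' where "S' = {k\<in>{1..n}. covered_upto (upd P Y) k}"
  have "S \<subseteq> S'" using tr_cov[OF D V] unfolding S_def S'_def by auto
  moreover have "Suc k \<in> S'" "Suc k \<notin> S" using cv' nc kn unfolding S_def S'_def by auto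
  ultimately have "S \<subset> S'" by blast
  hence "card S < card S'" by (rule psubset_card_mono[rotated]) (simp add: S'_def)
  thus ?thesis using N N' by (simp add: phi_def phiB_def S_def S'_def)
qed

end


context setting begin

definition G :: "stree option set \<Rightarrow> stree option set set" where
  "G P = {P'. phi P + 1 \<le> phi P'}"

lemma step_from:
  assumes I: "Inv P" and X: "X \<in> P" and q: "0 \<le> q"
    and h: "ennreal q \<le> emeasure (measure_pmf (hvl_prime n X)) {Y. upd P Y \<in> G P}"
  shows "ennreal (1 / real (card P) * q) \<le> emeasure (measure_pmf (smo_step n F w P)) (G P)"
proof -
  have fin: "finite P" using I by (simp add: Inv_def)
  have a: "ennreal (1 / real (card P)) \<le> emeasure (measure_pmf (pmf_of_set P)) {X}"
    using em_single[OF fin X] .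
  define f where "f = (\<lambda>X. bind_pmf (hvl_prime n X) (\<lambda>Y. return_pmf (upd P Y)))"
  have b: "\<And>x. x \<in> {X} \<Longrightarrow> ennreal q \<le> emeasure (measure_pmf (f x)) (G P)"
  proof -
    fix x assume "x \<in> {X}"
    hence x: "x = X" by simp
    show "ennreal q \<le> emeasure (measure_pmf (f x)) (G P)" unfolding x f_def by (rule bind_ret[OF h q])
  qed
  have "ennreal (1 / real (card P) * q) \<le> emeasure (measure_pmf (bind_pmf (pmf_of_set P) f)) (G P)"
    by (rule L3r[OF _ a q b]) simp
  thus ?thesis unfolding smo_step_eq f_def .
qed

lemma fitNone: "fit F w None = 0"
  using Exl_sub[of F "[]"] by (simp add: fit_Exl)

lemma final_ineq:
  assumes c: "1 \<le> c" "c \<le> Suc n" and q: "q = 1 / (6 * real n * (real n + 1))"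
    and that: "1/3 * (1 / (2 * real n)) \<le> r"
  shows "q \<le> 1 / real c * r"
proof -
  have n0: "real n \<ge> 1" using n1 by simp
  have "q = 1 / (real n + 1) * (1/3 * (1 / (2 * real n)))" using q by (simp add: field_simps)
  also have "\<dots> \<le> 1 / real c * (1/3 * (1 / (2 * real n)))"
  proof (rule mult_right_mono)
    have "real c \<le> real n + 1" "1 \<le> real c" using c by auto
    thus "1 / (real n + 1) \<le> 1 / real c" by (intro divide_left_mono) auto
    show "0 \<le> 1/3 * (1 / (2 * real n))" by simp
  qed
  also have "\<dots> \<le> 1 / real c * r" by (rule mult_left_mono) (use that in simp_all)
  finally show ?thesis .
qed

lemma prog:
  assumes I: "Inv P" and nc: "\<not> covers_front n F w P"
  shows "ennreal (1 / (6 * real n * (real n + 1))) \<le> emeasure (measure_pmf (smo_step n F w P)) (G P)"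
proof -
  have fin: "finite P" and ne: "P \<noteq> {}" using I by (auto simp: Inv_def)
  have cP: "1 \<le> card P" "card P \<le> Suc n" using card_Inv[OF I] fin ne by (auto simp: Suc_le_eq card_gt_0_iff)
  have n0: "real n \<ge> 1" using n1 by simp
  obtain X r where X: "X \<in> P" and r: "1/3 * (1 / (2 * real n)) \<le> r"
    and h: "ennreal r \<le> emeasure (measure_pmf (hvl_prime n X)) {Y. upd P Y \<in> G P}"
  proof (cases "None \<in> P")
    case False
    obtain Xm where Xm: "Xm \<in> P" and min: "\<forall>Z. Z \<in> P \<longrightarrow> cplx Xm \<le> cplx Z"
      using ex_has_least_nat[of "\<lambda>Z. Z \<in> P"] ne by blast
    have "set_pmf (delete_op Xm) \<subseteq> {Y. upd P Y \<in> G P}"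
      using progA[OF I False Xm] min unfolding G_def by auto
    hence "ennreal 1 \<le> emeasure (measure_pmf (delete_op Xm)) {Y. upd P Y \<in> G P}" by (rule em_all)
    hence "ennreal (1/3 * 1) \<le> emeasure (measure_pmf (hvl_prime n Xm)) {Y. upd P Y \<in> G P}"
      using hvl_op[of 1 2 Xm] by simp
    moreover have "1/3 * (1 / (2 * real n)) \<le> 1/3 * 1" using n0 by simp
    ultimately show ?thesis using that[OF Xm] by blast
  next
    case True
    have "\<not> covered_upto P n" using nc cov_front by blast
    moreover have "covered_upto P 0"
      unfolding covered_upto_def
    proof (intro allI impI)
      fix k' :: nat assume "k' \<le> 0"
      hence "k' = 0" by simp
      moreover have "objvec F w None = tgt w 0" using fitNone by (simp add: objvec_def tgt_W cplx_def)
      ultimately show "\<exists>Z\<in>P. objvec F w Z = tgt w k'" using True by blast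
    qed
    ultimately obtain k where kn: "k < n" and cv: "covered_upto P k" and nck: "\<not> covered_upto P (Suc k)"
      using first_fail[of "covered_upto P" n] by blast
    obtain Z where Z: "Z \<in> P" and oZ: "objvec F w Z = tgt w k" using cv unfolding covered_upto_def by blast
    have nrZ: "non_redundant F Z" using I Z by (simp add: Inv_def)
    have pZ: "pd (leaflist Z)" using nrZ nonred_pd by simp
    have cZ: "cplx Z = 2*k - 1" using oZ by (auto simp: objvec_def tgt_W)
    have lk: "length (leaflist Z) = k" using cZ by (simp add: cplx_len)
    have cpk: "card (posv (leaflist Z)) = k" using card_posv_pd[OF pZ] lk by simp
    have "\<not> {1..Suc k} \<subseteq> posv (leaflist Z)"
    proof
      assume "{1..Suc k} \<subseteq> posv (leaflist Z)"
      hence "card {1..Suc k} \<le> card (posv (leaflist Z))" by (rule card_mono[rotated]) simp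
      thus False using cpk by simp
    qed
    then obtain i0 where "i0 \<in> {1..Suc k}" "i0 \<notin> posv (leaflist Z)" by blast
    hence i: "1 \<le> i0" "i0 \<le> Suc k" "i0 \<notin> posv (leaflist Z)" by auto
    have good: "upd P Y \<in> G P" if "leaflist Z = a @ b" "leaflist Y = a @ Pos i0 # b" for a b Y
      using progB[OF I True kn Z oZ nck cv i that] unfolding G_def by simp
    have Ti: "Pos i0 \<in> terminals n" using Pos_terminals i kn by simp
    have T: "finite (terminals n)" using finite_terminals by simp
    have ct: "card (terminals n) = 2 * n" using card_terminals .
    have ins: "ennreal (1 / (2 * real n)) \<le> emeasure (measure_pmf (insert_op n Z)) {Y. upd P Y \<in> G P}"
    proof (cases Z)
      case None
      have "ennreal (1 / (2 * real n)) \<le> emeasure (measure_pmf (pmf_of_set (terminals n))) {Pos i0}"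
        using em_single[OF T Ti] ct by simp
      also have "\<dots> \<le> emeasure (measure_pmf (pmf_of_set (terminals n))) ((\<lambda>u. Some (L u)) -` {Y. upd P Y \<in> G P})"
        by (rule emeasure_mono) (use good[of "[]" "[]" "Some (L (Pos i0))"] None in auto)
      finally show ?thesis using None by (simp add: insert_op_def)
    next
      case (Some t)
      have K: "finite {..<nodes t}" "{..<nodes t} \<noteq> {}" using nleaves_pos[of t] nodes_leaves[of t]
        by (auto simp: lessThan_empty_iff)
      define g where "g = (\<lambda>k u. bind_pmf (pmf_of_set (UNIV :: bool set)) (\<lambda>b. return_pmf (Some (ins_node t k u b))))"
      have "ennreal (1 * (1 / (2 * real n) * 1)) \<le>
          emeasure (measure_pmf (bind_pmf (pmf_of_set {..<nodes t}) (\<lambda>k. bind_pmf (pmf_of_set (terminals n)) (\<lambda>u. g k u))))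
            {Y. upd P Y \<in> G P}"
      proof (rule L3r[where B="{..<nodes t}"])
        show "ennreal 1 \<le> emeasure (measure_pmf (pmf_of_set {..<nodes t})) {..<nodes t}"
          by (rule em_all) (use K in simp)
        fix kk assume kk: "kk \<in> {..<nodes t}"
        show "ennreal (1 / (2 * real n) * 1) \<le> emeasure (measure_pmf (bind_pmf (pmf_of_set (terminals n)) (\<lambda>u. g kk u))) {Y. upd P Y \<in> G P}"
        proof (rule L3r[where B="{Pos i0}"])
          show "ennreal (1 / (2 * real n)) \<le> emeasure (measure_pmf (pmf_of_set (terminals n))) {Pos i0}"
            using em_single[OF T Ti] ct by simp
          fix u assume "u \<in> {Pos i0}"
          hence u: "u = Pos i0" by simp
          have "set_pmf (pmf_of_set (UNIV :: bool set)) \<subseteq> {b. Some (ins_node t kk (Pos i0) b) \<in> {Y. upd P Y \<in> G P}}"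
          proof
            fix c :: bool
            obtain a b where "leaves t = a @ b" "leaves (ins_node t kk (Pos i0) c) = a @ Pos i0 # b"
              using leaves_ins kk by blast
            hence "upd P (Some (ins_node t kk (Pos i0) c)) \<in> G P" using good Some by simp
            thus "c \<in> {b. Some (ins_node t kk (Pos i0) b) \<in> {Y. upd P Y \<in> G P}}" by simp
          qed
          hence "ennreal 1 \<le> emeasure (measure_pmf (pmf_of_set (UNIV :: bool set))) {b. Some (ins_node t kk (Pos i0) b) \<in> {Y. upd P Y \<in> G P}}"
            by (rule em_all)
          thus "ennreal 1 \<le> emeasure (measure_pmf (g kk u)) {Y. upd P Y \<in> G P}"
            unfolding g_def u by (rule bind_ret) simp
        qed simp_all
      qed simp_all
      thus ?thesis using Some by (simp add: insert_op_def g_def)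
    qed
    have "ennreal (1/3 * (1 / (2 * real n))) \<le> emeasure (measure_pmf (hvl_prime n Z)) {Y. upd P Y \<in> G P}"
      using hvl_op[of "1 / (2 * real n)" 1 Z] ins by simp
    thus ?thesis using that[OF Z] by blast
  qed
  have "0 \<le> 1/3 * (1 / (2 * real n))" by simp
  hence r0: "0 \<le> r" using r by linarith
  have "ennreal (1 / real (card P) * r) \<le> emeasure (measure_pmf (smo_step n F w P)) (G P)"
    using step_from[OF I X r0 h] .
  moreover have "1 / (6 * real n * (real n + 1)) \<le> 1 / real (card P) * r"
    using final_ineq[OF cP refl r] .
  hence "ennreal (1 / (6 * real n * (real n + 1))) \<le> ennreal (1 / real (card P) * r)" by (rule ennreal_leI)
  ultimately show ?thesis by (rule order_trans[rotated])
qed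

end


context setting begin

definition K :: nat where "K = 6 * n * (n + 1)"

definition g :: "stree option set \<Rightarrow> ennreal" where
  "g P = of_nat (K * (3*n - phi P))"

lemma K_inv: "of_nat K * ennreal (1 / (6 * real n * (real n + 1))) = 1"
proof -
  have rK: "real K = 6 * real n * (real n + 1)" by (simp add: K_def algebra_simps)
  have "(of_nat K :: ennreal) = ennreal (real K)" by (rule ennreal_of_nat_eq_real_of_nat)
  hence "(of_nat K :: ennreal) = ennreal (6 * real n * (real n + 1))" using rK by simp
  moreover have "6 * real n * (real n + 1) > 0" using n1 by simp
  ultimately show ?thesis using n1 by (simp add: ennreal_mult[symmetric])
qed

lemma D1:
  assumes I: "Inv P" and nc: "\<not> covers_front n F w P"
  shows "(\<integral>\<^sup>+P'. g P' \<partial>measure_pmf (smo_step n F w P)) + 1 \<le> g P"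
proof -
  let ?M = "measure_pmf (smo_step n F w P)"
  have pw: "g P' + of_nat K * indicator (G P) P' \<le> g P" if P': "P' \<in> set_pmf (smo_step n F w P)" for P'
  proof -
    have m: "phi P \<le> phi P'" using mono_step[OF I P'] .
    have le: "phi P' \<le> 3*n" using phi_le .
    show ?thesis
    proof (cases "P' \<in> G P")
      case True
      hence "phi P + 1 \<le> phi P'" by (simp add: G_def)
      hence "3*n - phi P' + 1 \<le> 3*n - phi P" using le by arith
      hence "K * (3*n - phi P' + 1) \<le> K * (3*n - phi P)" by (rule mult_le_mono2)
      moreover have "K * (3*n - phi P') + K = K * (3*n - phi P' + 1)" by simp
      ultimately have "K * (3*n - phi P') + K \<le> K * (3*n - phi P)" by simp
      hence "(of_nat (K * (3*n - phi P') + K) :: ennreal) \<le> of_nat (K * (3*n - phi P))" by (simp only: of_nat_le_iff)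
      thus ?thesis using True by (simp add: g_def)
    next
      case False
      have "phi P' = phi P" using m False by (simp add: G_def)
      thus ?thesis using False by (simp add: g_def)
    qed
  qed
  have "1 \<le> of_nat K * emeasure ?M (G P)"
  proof -
    have "of_nat K * ennreal (1 / (6 * real n * (real n + 1))) \<le> of_nat K * emeasure ?M (G P)"
      by (rule mult_left_mono) (use prog[OF I nc] in auto)
    thus ?thesis using K_inv by simp
  qed
  hence "(\<integral>\<^sup>+P'. g P' \<partial>?M) + 1 \<le> (\<integral>\<^sup>+P'. g P' \<partial>?M) + of_nat K * emeasure ?M (G P)"
    by (rule add_left_mono)
  also have "\<dots> = (\<integral>\<^sup>+P'. g P' + of_nat K * indicator (G P) P' \<partial>?M)"
    by (simp add: nn_integral_add nn_integral_cmult_indicator)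
  also have "\<dots> \<le> (\<integral>\<^sup>+P'. g P \<partial>?M)"
    by (rule nn_integral_mono_AE) (simp add: AE_measure_pmf_iff pw)
  also have "\<dots> = g P" by (simp add: measure_pmf.emeasure_space_1)
  finally show ?thesis .
qed

lemma D2:
  assumes I: "Inv P"
  shows "(\<integral>\<^sup>+P'. g P' \<partial>measure_pmf (stopped_step n F w P)) + indicator {P. \<not> covers_front n F w P} P \<le> g P"
proof (cases "covers_front n F w P")
  case True thus ?thesis by (simp add: stopped_step_def)
next
  case False thus ?thesis using D1[OF I False] by (simp add: stopped_step_def)
qed

lemma run_Inv: "Inv {X0} \<Longrightarrow> P \<in> set_pmf (smo_run n F w X0 t) \<Longrightarrow> Inv P"
proof (induction t arbitrary: P)
  case 0 thus ?case by simp
next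
  case (Suc t)
  then obtain Q where Q: "Q \<in> set_pmf (smo_run n F w X0 t)" "P \<in> set_pmf (stopped_step n F w Q)" by auto
  have IQ: "Inv Q" using Suc.IH[OF Suc.prems(1) Q(1)] .
  show ?case
  proof (cases "covers_front n F w Q")
    case True thus ?thesis using Q(2) IQ by (simp add: stopped_step_def)
  next
    case False thus ?thesis using Q(2) IQ Inv_smo by (simp add: stopped_step_def)
  qed
qed

definition E :: "stree option \<Rightarrow> nat \<Rightarrow> ennreal" where
  "E X0 t = (\<integral>\<^sup>+P. g P \<partial>measure_pmf (smo_run n F w X0 t))"

lemma E_step:
  assumes I0: "Inv {X0}"
  shows "E X0 (Suc t) + emeasure (measure_pmf (smo_run n F w X0 t)) {P. \<not> covers_front n F w P} \<le> E X0 t"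
proof -
  let ?M = "measure_pmf (smo_run n F w X0 t)"
  let ?A = "{P. \<not> covers_front n F w P}"
  have "E X0 (Suc t) + emeasure ?M ?A
      = (\<integral>\<^sup>+P. (\<integral>\<^sup>+P'. g P' \<partial>measure_pmf (stopped_step n F w P)) \<partial>?M) + (\<integral>\<^sup>+P. indicator ?A P \<partial>?M)"
    by (simp add: E_def)
  also have "\<dots> = (\<integral>\<^sup>+P. (\<integral>\<^sup>+P'. g P' \<partial>measure_pmf (stopped_step n F w P)) + indicator ?A P \<partial>?M)"
    by (rule nn_integral_add[symmetric]) simp_all
  also have "\<dots> \<le> (\<integral>\<^sup>+P. g P \<partial>?M)"
    by (rule nn_integral_mono_AE) (simp add: AE_measure_pmf_iff D2 run_Inv[OF I0])
  finally show ?thesis by (simp add: E_def)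
qed

lemma E_sum:
  assumes I0: "Inv {X0}"
  shows "(\<Sum>t<T. emeasure (measure_pmf (smo_run n F w X0 t)) {P. \<not> covers_front n F w P}) + E X0 T \<le> E X0 0"
proof (induction T)
  case 0 thus ?case by simp
next
  case (Suc T)
  have "(\<Sum>t<Suc T. emeasure (measure_pmf (smo_run n F w X0 t)) {P. \<not> covers_front n F w P}) + E X0 (Suc T)
     = (\<Sum>t<T. emeasure (measure_pmf (smo_run n F w X0 t)) {P. \<not> covers_front n F w P})
        + (E X0 (Suc T) + emeasure (measure_pmf (smo_run n F w X0 T)) {P. \<not> covers_front n F w P})"
    by (simp add: ac_simps)
  also have "\<dots> \<le> (\<Sum>t<T. emeasure (measure_pmf (smo_run n F w X0 t)) {P. \<not> covers_front n F w P}) + E X0 T"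
    by (rule add_left_mono) (rule E_step[OF I0])
  also have "\<dots> \<le> E X0 0" using Suc .
  finally show ?case .
qed

lemma main_bound:
  assumes I0: "Inv {X0}"
  shows "expected_opt_time n F w X0 \<le> of_nat (K * (3*n))"
proof -
  have "K * (3*n - phi {X0}) \<le> K * (3*n)" by simp
  hence "g {X0} \<le> of_nat (K * (3*n))" by (simp only: g_def of_nat_le_iff)
  moreover have "E X0 0 = g {X0}" by (simp add: E_def)
  ultimately have E0: "E X0 0 \<le> of_nat (K * (3*n))" by simp
  have "(\<Sum>t. ennreal (measure_pmf.prob (smo_run n F w X0 t) {P. \<not> covers_front n F w P})) \<le> of_nat (K * (3*n))"
  proof (rule suminf_le_const[OF summableI])
    fix T
    have "(\<Sum>t<T. ennreal (measure_pmf.prob (smo_run n F w X0 t) {P. \<not> covers_front n F w P}))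
        = (\<Sum>t<T. emeasure (measure_pmf (smo_run n F w X0 t)) {P. \<not> covers_front n F w P})"
      by (simp add: measure_pmf.emeasure_eq_measure)
    also have "\<dots> \<le> (\<Sum>t<T. emeasure (measure_pmf (smo_run n F w X0 t)) {P. \<not> covers_front n F w P}) + E X0 T"
      by simp
    also have "\<dots> \<le> E X0 0" using E_sum[OF I0] .
    finally show "(\<Sum>t<T. ennreal (measure_pmf.prob (smo_run n F w X0 t) {P. \<not> covers_front n F w P})) \<le> of_nat (K * (3*n))"
      using E0 by simp
  qed
  thus ?thesis by (simp add: expected_opt_time_def)
qed

end

theorem theorem6:
  fixes F :: fitness
  shows "\<exists>c::real. \<forall>(n::nat) (w::nat \<Rightarrow> real) (X0::stree option).
           n \<ge> 1 \<longrightarrow>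
           (\<forall>i\<in>{1..<n}. w i \<ge> w (Suc i)) \<longrightarrow> w n > 0 \<longrightarrow>
           valid_tree n X0 \<longrightarrow> non_redundant F X0 \<longrightarrow>
           expected_opt_time n F w X0 \<le> ennreal (c * real n ^ 3)"
proof (intro exI allI impI)
  fix n :: nat and w :: "nat \<Rightarrow> real" and X0
  assume h: "n \<ge> 1" "\<forall>i\<in>{1..<n}. w i \<ge> w (Suc i)" "w n > 0" "valid_tree n X0" "non_redundant F X0"
  interpret S: setting n F w using h by unfold_locales auto
  have "expected_opt_time n F w X0 \<le> of_nat (S.K * (3*n))"
    by (rule S.main_bound) (use h(4,5) in \<open>simp add: S.Inv_def\<close>)
  also have "(of_nat (S.K * (3*n)) :: ennreal) = ennreal (real (S.K * (3*n)))"
    by (simp add: ennreal_of_nat_eq_real_of_nat)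
  also have "\<dots> \<le> ennreal (36 * real n ^ 3)"
  proof (rule ennreal_leI)
    have "real (S.K * (3*n)) = 18 * real n ^ 2 * (real n + 1)" by (simp add: S.K_def power2_eq_square algebra_simps)
    also have "\<dots> \<le> 18 * real n ^ 2 * (2 * real n)" using h(1) by (intro mult_left_mono) auto
    also have "\<dots> = 36 * real n ^ 3" by (simp add: power2_eq_square power3_eq_cube)
    finally show "real (S.K * (3*n)) \<le> 36 * real n ^ 3" .
  qed
  finally show "expected_opt_time n F w X0 \<le> ennreal (36 * real n ^ 3)" .
qed


end
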